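(* Let $p,q\geq0$ be integers with $(p,q)\notin\{(1,0),(0,1),(1,1)\}$. Then $\beta_{p,q}(D)\neq0$ for every real $D>4$, where $$\beta_{p,q}(D)=\frac{(-1)^q2^p}{D^q[(D-1)(D-2)]^p}\Big[(-1)^{p+q}2^{p+q-1}(D-2)(D-3)+2^{1-q}(D-2)(D-3)^p(D-4)^q+(-1)^p(D-2)^{p+q}(D-3)^p\Big].$$ *)

theory Defs
  imports Complex_Main
begin

text \<open>The function beta_{p,q}(D). Powers of 2 with possibly negative integer exponents
(p+q-1, 1-q) are written with real exponent powr (base 2 > 0).\<close>
definition beta :: "nat \<Rightarrow> nat \<Rightarrow> real \<Rightarrow> real" where
  "beta p q D =
     ((-1) ^ q * 2 ^ p) / (D ^ q * ((D - 1) * (D - 2)) ^ p) *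
     ((-1) ^ (p + q) * 2 powr (real p + real q - 1) * (D - 2) * (D - 3)
      + 2 powr (1 - real q) * (D - 2) * (D - 3) ^ p * (D - 4) ^ q
      + (-1) ^ p * (D - 2) ^ (p + q) * (D - 3) ^ p)"

end

theory Submission
  imports Defs
begin

lemma superadd: fixes a b :: real assumes "a \<ge> 0" "b \<ge> 0" "n \<ge> 1"
  shows "a ^ n + b ^ n \<le> (a + b) ^ n"
  using assms(3)
proof (induction n rule: dec_induct)
  case base then show ?case by simp
next
  case (step n)
  have "a ^ Suc n + b ^ Suc n \<le> (a + b) * (a ^ n + b ^ n)"
    using assms by (simp add: algebra_simps)
  also have "\<dots> \<le> (a + b) * (a + b) ^ n"
    using step.IH assms by (intro mult_left_mono) auto
  finally show ?case by simp
qed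

lemma pow_ge2: fixes x :: real assumes "x > 2" "n \<ge> 1" shows "x ^ n > 2 ^ n"
  using assms by (intro power_strict_mono) auto

lemma key:
  fixes x s t :: real and p q :: nat
  assumes x: "x > 2" and s: "s > 0" "s * 2 ^ q = 2" and t: "t * 2 = 2 ^ (p + q)"
    and pq: "(p, q) \<notin> {(1, 0), (0, 1), (1, 1)}"
  shows "(-1) ^ p * ((-1) ^ (p + q) * t * x * (x - 1) + s * x * (x - 1) ^ p * (x - 2) ^ q
           + (-1) ^ p * x ^ (p + q) * (x - 1) ^ p) > 0"
proof -
  have t0: "t > 0" using t by (metis zero_less_numeral zero_less_power zero_less_mult_pos2)
  have x1: "x - 1 > 1" using x by simp
  have y: "x - 2 > 0" using x by simp
  have xp: "x ^ n > 0" "(x - 1) ^ n > 0" for n using x by simp_all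
  consider "even p" "even q" | "even p" "odd q" | "odd p" "even q" | "odd p" "odd q" by blast
  then show ?thesis
  proof cases
    case 1
    have "t * x * (x - 1) > 0" using t0 x by simp
    moreover have "s * x * (x - 1) ^ p * (x - 2) ^ q > 0" using s x y by simp
    moreover have "x ^ (p + q) * (x - 1) ^ p > 0" using x by simp
    ultimately show ?thesis using 1 by simp
  next
    case 2
    have A: "x ^ (p + q) * (x - 1) ^ p \<ge> t * x * (x - 1)"
    proof (cases "p = 0")
      case True
      have "q \<noteq> 1" using pq True by auto
      moreover obtain k where "q = 2 * k + 1" using 2 oddE by blast
      ultimately have q3: "q \<ge> 3" by simp
      have e: "(2::real) ^ q = 2 ^ 3 * 2 ^ (q - 3)" using q3 by (metis le_add_diff_inverse power_add)
      have tq: "t = 4 * 2 ^ (q - 3)" using t True e by simp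
      have "x ^ q = x ^ 3 * x ^ (q - 3)" using q3 by (simp add: power_add[symmetric])
      moreover have "x ^ 3 \<ge> 4 * x * (x - 1)"
      proof -
        have "x * (x - 2) ^ 2 \<ge> 0" using x by simp
        then show ?thesis by (simp add: power2_eq_square power3_eq_cube algebra_simps)
      qed
      moreover have "x ^ (q - 3) \<ge> 2 ^ (q - 3)" using x by (intro power_mono) auto
      ultimately have "x ^ q \<ge> 4 * x * (x - 1) * 2 ^ (q - 3)"
        using x by (simp only:) (rule mult_mono, auto)
      moreover have "t * x * (x - 1) = 4 * x * (x - 1) * 2 ^ (q - 3)" unfolding tq by simp
      ultimately have "t * x * (x - 1) \<le> x ^ q" by linarith
      then show ?thesis using True by simp
    next
      case False
      obtain n where n: "p + q = Suc n" using False by (cases "p + q") auto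
      have tm: "t = 2 ^ n" using t n by simp
      have "x ^ n \<ge> 2 ^ n" using x by (intro power_mono) auto
      then have a1: "x ^ (p + q) \<ge> t * x" unfolding n tm using x by (simp add: mult_right_mono mult.commute)
      have "(x - 1) ^ 1 \<le> (x - 1) ^ p" using x1 False by (intro power_increasing) auto
      then have a2: "(x - 1) ^ p \<ge> x - 1" by simp
      show ?thesis using mult_mono[OF a1 a2] x by (simp add: mult.assoc)
    qed
    have "s * x * (x - 1) ^ p * (x - 2) ^ q > 0" using s x y by simp
    then show ?thesis using 2 A by simp
  next
    case 3
    have A0: "x ^ (p + q) \<ge> s * x * (x - 2) ^ q"
    proof (cases "q = 0")
      case True
      then have p3: "p \<ge> 2" using pq 3 by (cases p) auto
      have "x ^ p = x * x * x ^ (p - 2)" using p3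
        by (metis le_add_diff_inverse power_add power2_eq_square)
      moreover have "x ^ (p - 2) \<ge> 1" using x by (simp add: one_le_power)
      ultimately have "x ^ p \<ge> x * x" using x
        by (simp add: mult_le_cancel_left1)
      moreover have "x * x \<ge> 2 * x" using x by simp
      moreover have "s = 2" using s True by simp
      ultimately show ?thesis using True by simp
    next
      case False
      have "(2::real) ^ 1 \<le> 2 ^ q" by (rule power_increasing) (use False in auto)
      then have "s * 2 ^ q \<le> 1 * 2 ^ q" using s by simp
      then have s1: "s \<le> 1" by (rule mult_right_le_imp_le) simp
      obtain p' where p': "p = Suc p'" using 3 by (cases p) auto
      have e1: "x ^ (p + q) = x * x ^ (p - 1) * x ^ q" unfolding p' by (simp add: power_add)
      have e2: "x ^ (p - 1) \<ge> 1" using x by (simp add: one_le_power)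
      have e3: "x ^ q \<ge> (x - 2) ^ q" using y by (intro power_mono) auto
      have e4: "(x - 2) ^ q \<ge> s * (x - 2) ^ q" using s1 y by (simp add: mult_left_le_one_le)
      have e5: "x * 1 \<le> x * x ^ (p - 1)" using e2 x by simp
      have "x * 1 * (s * (x - 2) ^ q) \<le> x * x ^ (p - 1) * x ^ q"
        by (rule mult_mono[OF e5 order.trans[OF e4 e3]]) (use x s y in auto)
      then have "x ^ (p + q) \<ge> x * 1 * (s * (x - 2) ^ q)" using e1 by simp
      then show ?thesis by (simp add: algebra_simps)
    qed
    have A: "x ^ (p + q) * (x - 1) ^ p \<ge> s * x * (x - 1) ^ p * (x - 2) ^ q"
    proof -
      have h: "s * x * (x - 2) ^ q * (x - 1) ^ p \<le> x ^ (p + q) * (x - 1) ^ p"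
        by (rule mult_right_mono[OF A0]) (use x1 in simp)
      then show ?thesis by (simp only: ac_simps)
    qed
    have "t * x * (x - 1) > 0" using t0 x by simp
    then show ?thesis using 3 A by simp
  next
    case 4
    define m where "m = p + q - 1"
    have pm: "p + q = Suc m" using 4 m_def by (simp add: odd_pos)
    have tm: "t = 2 ^ m" using t pm by simp
    have pq4: "p + q \<ge> 3"
    proof -
      obtain a b where "p = 2 * a + 1" "q = 2 * b + 1" using 4 oddE by metis
      moreover have "\<not> (p = 1 \<and> q = 1)" using pq by auto
      ultimately show ?thesis by auto
    qed
    obtain p' where p': "p = Suc p'" using 4 by (cases p) auto
    have xm: "x ^ m = x ^ (p - 1) * x ^ q" using m_def p' by (simp add: power_add)
    have "x ^ (p - 1) \<ge> 2 ^ (p - 1)" using x by (intro power_mono) auto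
    moreover have sq: "2 ^ q + (x - 2) ^ q \<le> x ^ q"
      using superadd[of 2 "x - 2" q] y 4 by (simp add: odd_pos Suc_leI)
    ultimately have "x ^ m \<ge> 2 ^ (p - 1) * (2 ^ q + (x - 2) ^ q)" unfolding xm
      using y by (intro mult_mono) auto
    moreover have "2 ^ (p - 1) * 2 ^ q = t" using tm m_def p' by (simp add: power_add)
    moreover have "2 ^ (p - 1) * (x - 2) ^ q > s * (x - 2) ^ q"
    proof -
      have "(2::real) ^ (p - 1) * 2 ^ q = 2 ^ m" using m_def p' by (simp add: power_add)
      moreover have "(2::real) ^ 1 < 2 ^ m" using pm pq4 by (intro power_strict_increasing) auto
      ultimately have "2 ^ (p - 1) * 2 ^ q > s * 2 ^ q" using s by simp
      then have "2 ^ (p - 1) > s" by simp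
      then show ?thesis using y by simp
    qed
    ultimately have B: "x ^ m - s * (x - 2) ^ q - t > 0" by (simp add: algebra_simps)
    have "(x - 1) ^ 1 \<le> (x - 1) ^ p" using x1 p' by (intro power_increasing) auto
    then have a2: "(x - 1) ^ p \<ge> x - 1" by simp
    have "(x - 1) ^ p * (x ^ m - s * (x - 2) ^ q - t) > 0" using B xp by simp
    moreover have "t * (x - 1) \<le> t * (x - 1) ^ p" using a2 t0 by simp
    ultimately have "x ^ m * (x - 1) ^ p > t * (x - 1) + s * (x - 1) ^ p * (x - 2) ^ q"
      by (simp add: algebra_simps)
    then have "x * (x ^ m * (x - 1) ^ p) > x * (t * (x - 1) + s * (x - 1) ^ p * (x - 2) ^ q)"
      using x by simp
    then have A: "x ^ (p + q) * (x - 1) ^ p > t * x * (x - 1) + s * x * (x - 1) ^ p * (x - 2) ^ q"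
      unfolding pm by (simp add: algebra_simps)
    then show ?thesis using 4 by simp
  qed
qed

theorem mainTheorem7:
  fixes p q :: nat and D :: real
  assumes "(p, q) \<notin> {(1, 0), (0, 1), (1, 1)}"
    and "D > 4"
  shows "beta p q D \<noteq> 0"
proof -
  define x where "x = D - 2"
  define s where "s = 2 powr (1 - real q)"
  define t where "t = 2 powr (real p + real q - 1)"
  have x: "x > 2" using assms(2) x_def by simp
  have s: "s > 0" "s * 2 ^ q = 2"
    unfolding s_def by (simp_all add: powr_realpow[symmetric] powr_add[symmetric])
  have t: "t * 2 = 2 ^ (p + q)"
  proof -
    have "t = 2 powr (real (p + q)) / 2" unfolding t_def by (simp add: powr_diff)
    moreover have e: "(2::real) powr real (p + q) = 2 ^ (p + q)" by (rule powr_realpow) simp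
    ultimately have "t = 2 ^ (p + q) / 2" by (simp only:)
    then show ?thesis by simp
  qed
  have k: "(-1) ^ p * ((-1) ^ (p + q) * t * x * (x - 1) + s * x * (x - 1) ^ p * (x - 2) ^ q
           + (-1) ^ p * x ^ (p + q) * (x - 1) ^ p) > 0"
    by (rule key[OF x s t assms(1)])
  have B: "(-1) ^ (p + q) * t * (D - 2) * (D - 3) + s * (D - 2) * (D - 3) ^ p * (D - 4) ^ q
      + (-1) ^ p * (D - 2) ^ (p + q) * (D - 3) ^ p \<noteq> 0"
  proof
    assume "(-1) ^ (p + q) * t * (D - 2) * (D - 3) + s * (D - 2) * (D - 3) ^ p * (D - 4) ^ q
      + (-1) ^ p * (D - 2) ^ (p + q) * (D - 3) ^ p = 0"
    moreover have "D - 3 = x - 1" "D - 4 = x - 2" "D - 2 = x" using x_def by simp_all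
    ultimately show False using k by simp
  qed
  have K: "((-1) ^ q * 2 ^ p) / (D ^ q * ((D - 1) * (D - 2)) ^ p) \<noteq> (0::real)"
    using assms(2) by simp
  show ?thesis unfolding beta_def using B K s_def t_def by simp
qed

end
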